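(* Let $\Gamma$ be a finite simple graph and $g\in G(\Gamma)$. The following are equivalent: (i) $g$ is cyclically reduced; (ii) there is no geodesic decomposition $g=u^{-1}hu$ with $u,h\in G(\Gamma)$ and $u\ne1$; (iii) $|g^n|=n|g|$ for all $n\ge2$; (iv) $|g^n|=n|g|$ for some $n\ge 2$; (v) for every geodesic decomposition $g=g_1g_2$, the decomposition $g_2g_1$ is also geodesic (i.e. $|g_2g_1|=|g_2|+|g_1|$).
   Context: $G(\Gamma)=\langle v\in V(\Gamma)\mid [v_i,v_j]=1 \text{ if } \{v_i,v_j\}\notin E(\Gamma)\rangle$. $|g|$ is word length with respect to $V(\Gamma)$. A decomposition $g=g_1\cdots g_k$ is geodesic if $|g|=|g_1|+\cdots+|g_k|$. An element is cyclically reduced if it has minimum word length in its conjugacy class. *)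

theory Defs
  imports Main
begin

text \<open>Right-angled Artin group G(Gamma) on a finite vertex set V with (symmetric,
irreflexive) edge relation E; generators commute iff they are NOT adjacent.
Group elements are represented by words over letters (v, b), where b = True means v
and b = False means v^-1; two words represent the same element iff they are related
by the equivalence closure of free cancellation and commutation of non-adjacent letters.\<close>

type_synonym 'v letter = "'v \<times> bool"

definition inv_letter :: "'v letter \<Rightarrow> 'v letter" where
  "inv_letter a = (fst a, \<not> snd a)"

definition inv_word :: "'v letter list \<Rightarrow> 'v letter list" where
  "inv_word w = rev (map inv_letter w)"

definition word :: "'v set \<Rightarrow> 'v letter list \<Rightarrow> bool" where
  "word V w \<longleftrightarrow> fst ` set w \<subseteq> V"

inductive rstep :: "'v set \<Rightarrow> ('v \<Rightarrow> 'v \<Rightarrow> bool) \<Rightarrow> 'v letter list \<Rightarrow> 'v letter list \<Rightarrow> bool"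
  for V E where
  cancel: "fst a \<in> V \<Longrightarrow> rstep V E (xs @ a # inv_letter a # ys) (xs @ ys)"
| comm: "fst a \<in> V \<Longrightarrow> fst b \<in> V \<Longrightarrow> \<not> E (fst a) (fst b) \<Longrightarrow>
           rstep V E (xs @ a # b # ys) (xs @ b # a # ys)"

definition eqv :: "'v set \<Rightarrow> ('v \<Rightarrow> 'v \<Rightarrow> bool) \<Rightarrow> 'v letter list \<Rightarrow> 'v letter list \<Rightarrow> bool" where
  "eqv V E = equivclp (rstep V E)"

definition wlen :: "'v set \<Rightarrow> ('v \<Rightarrow> 'v \<Rightarrow> bool) \<Rightarrow> 'v letter list \<Rightarrow> nat" where
  "wlen V E w = (LEAST n. \<exists>w'. eqv V E w w' \<and> length w' = n)"

definition wpow :: "'v letter list \<Rightarrow> nat \<Rightarrow> 'v letter list" where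
  "wpow w n = concat (replicate n w)"

definition cyc_reduced :: "'v set \<Rightarrow> ('v \<Rightarrow> 'v \<Rightarrow> bool) \<Rightarrow> 'v letter list \<Rightarrow> bool" where
  "cyc_reduced V E g \<longleftrightarrow>
     (\<forall>u. word V u \<longrightarrow> wlen V E g \<le> wlen V E (inv_word u @ g @ u))"

end

theory Submission
  imports Defs
begin


lemma inv_letter_inv[simp]: "inv_letter (inv_letter a) = a"
  by (simp add: inv_letter_def)
lemma fst_inv_letter[simp]: "fst (inv_letter a) = fst a"
  by (simp add: inv_letter_def)
lemma snd_inv_letter[simp]: "snd (inv_letter a) = (\<not> snd a)"
  by (simp add: inv_letter_def)

lemma inv_word_inv[simp]: "inv_word (inv_word u) = u"
  by (simp add: inv_word_def rev_map comp_def)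
lemma inv_word_append[simp]: "inv_word (x @ y) = inv_word y @ inv_word x"
  by (simp add: inv_word_def)
lemma inv_word_Cons[simp]: "inv_word (a # x) = inv_word x @ [inv_letter a]"
  by (simp add: inv_word_def)
lemma inv_word_Nil[simp]: "inv_word [] = []"
  by (simp add: inv_word_def)
lemma length_inv_word[simp]: "length (inv_word u) = length u"
  by (simp add: inv_word_def)
lemma word_inv_word[simp]: "word V (inv_word u) = word V u"
  by (simp add: inv_word_def word_def image_image)
lemma word_append[simp]: "word V (x @ y) = (word V x \<and> word V y)"
  by (auto simp add: word_def)
lemma word_Cons[simp]: "word V (a # y) = (fst a \<in> V \<and> word V y)"
  by (auto simp add: word_def)
lemma word_Nil[simp]: "word V []"
  by (auto simp add: word_def)

lemma eqv_refl[simp]: "eqv V E x x"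
  by (simp add: eqv_def)
lemma eqv_sym: "eqv V E x y \<Longrightarrow> eqv V E y x"
  unfolding eqv_def by (rule equivclp_sym)
lemma eqv_trans[trans]: "eqv V E x y \<Longrightarrow> eqv V E y z \<Longrightarrow> eqv V E x z"
  unfolding eqv_def by (rule equivclp_trans)
lemma rstep_eqv: "rstep V E x y \<Longrightarrow> eqv V E x y"
  unfolding eqv_def by blast

lemma rstep_ctx: "rstep V E x y \<Longrightarrow> rstep V E (l @ x @ r) (l @ y @ r)"
proof (induction rule: rstep.induct)
  case (cancel a xs ys)
  then show ?case using rstep.cancel[where a=a and xs="l @ xs" and ys="ys @ r"] by simp
next
  case (comm a b xs ys)
  then show ?case using rstep.comm[where a=a and b=b and xs="l @ xs" and ys="ys @ r"] by simp
qed

lemma eqv_ctx: "eqv V E x y \<Longrightarrow> eqv V E (l @ x @ r) (l @ y @ r)"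
  unfolding eqv_def
proof (induction rule: equivclp_induct)
  case base
  then show ?case by simp
next
  case (step y z)
  then show ?case using rstep_ctx
    by (metis equivclp_into_equivclp)
qed

lemma eqv_app: "eqv V E x x' \<Longrightarrow> eqv V E y y' \<Longrightarrow> eqv V E (x @ y) (x' @ y')"
  using eqv_ctx[of V E x x' "[]" y] eqv_ctx[of V E y y' x' "[]"] eqv_trans by fastforce

lemma rstep_inv: "rstep V E x y \<Longrightarrow> (\<And>x y. E x y \<Longrightarrow> E y x) \<Longrightarrow> rstep V E (inv_word x) (inv_word y)"
proof (induction rule: rstep.induct)
  case (cancel a xs ys)
  then show ?case using rstep.cancel[where a="a" and xs="inv_word ys" and ys="inv_word xs"] by simp
next
  case (comm a b xs ys)
  have "\<not> E (fst b) (fst a)" using comm by blast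
  then show ?case using comm rstep.comm[where a="inv_letter b" and b="inv_letter a" and xs="inv_word ys" and ys="inv_word xs"] by simp
qed

lemma eqv_inv: "eqv V E x y \<Longrightarrow> (\<And>x y. E x y \<Longrightarrow> E y x) \<Longrightarrow> eqv V E (inv_word x) (inv_word y)"
  unfolding eqv_def
proof (induction rule: equivclp_induct)
  case base
  then show ?case by simp
next
  case (step y z)
  then show ?case using rstep_inv
    by (metis equivclp_into_equivclp)
qed

lemma eqv_cancel: "fst a \<in> V \<Longrightarrow> eqv V E (xs @ a # inv_letter a # ys) (xs @ ys)"
  by (rule rstep_eqv, rule rstep.cancel)

lemma eqv_inv_cancel: "word V u \<Longrightarrow> eqv V E (inv_word u @ u) []"
proof (induction u)
  case Nil
  then show ?case by simp
next
  case (Cons a u)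
  have "eqv V E (inv_word u @ inv_letter a # a # u) (inv_word u @ u)"
    using eqv_cancel[where a="inv_letter a" and xs="inv_word u" and ys=u and V=V and E=E] Cons by simp
  then show ?case using Cons eqv_trans by fastforce
qed

lemma eqv_inv_cancel2: "word V u \<Longrightarrow> eqv V E (u @ inv_word u) []"
  using eqv_inv_cancel[where u="inv_word u" and V=V and E=E] by simp

lemma eqv_comm_past: "fst x \<in> V \<Longrightarrow> word V q \<Longrightarrow> (\<forall>b\<in>set q. \<not> E (fst x) (fst b))
   \<Longrightarrow> eqv V E (x # q) (q @ [x])"
proof (induction q)
  case Nil
  then show ?case by simp
next
  case (Cons b q)
  have r: "rstep V E ([] @ x # b # q) ([] @ b # x # q)"
    by (rule rstep.comm) (use Cons.prems in auto)
  have 1: "eqv V E (x # b # q) (b # x # q)"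
    using rstep_eqv[OF r] by simp
  have ih: "eqv V E (x # q) (q @ [x])" using Cons by simp
  have 2: "eqv V E (b # x # q) (b # q @ [x])"
    using eqv_ctx[OF ih, of "[b]" "[]"] by simp
  show ?case using eqv_trans[OF 1 2] by simp
qed

lemma wlen_ex: "\<exists>w'. eqv V E w w' \<and> length w' = wlen V E w"
  unfolding wlen_def by (rule LeastI_ex) (use eqv_refl in blast)

lemma wlen_le: "eqv V E w w' \<Longrightarrow> wlen V E w \<le> length w'"
  unfolding wlen_def by (rule Least_le) blast

lemma wlen_le_length: "wlen V E w \<le> length w"
  by (rule wlen_le) simp

lemma wlen_eqv: "eqv V E x y \<Longrightarrow> wlen V E x = wlen V E y"
proof -
  assume xy: "eqv V E x y"
  obtain x' where x': "eqv V E x x'" "length x' = wlen V E x" using wlen_ex by blast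
  obtain y' where y': "eqv V E y y'" "length y' = wlen V E y" using wlen_ex by blast
  have "wlen V E y \<le> length x'" using xy x' eqv_sym eqv_trans wlen_le by metis
  moreover have "wlen V E x \<le> length y'" using xy y' eqv_sym eqv_trans wlen_le by metis
  ultimately show ?thesis using x' y' by simp
qed

lemma wlen_append: "wlen V E (x @ y) \<le> wlen V E x + wlen V E y"
proof -
  obtain x' where x': "eqv V E x x'" "length x' = wlen V E x" using wlen_ex by blast
  obtain y' where y': "eqv V E y y'" "length y' = wlen V E y" using wlen_ex by blast
  have "eqv V E (x @ y) (x' @ y')" using eqv_app x' y' by blast
  then show ?thesis using wlen_le x' y' by fastforce
qed

lemma wlen_zero: "wlen V E u = 0 \<longleftrightarrow> eqv V E u []"
proof
  assume "wlen V E u = 0" then show "eqv V E u []" using wlen_ex[of V E u] by auto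
next
  assume "eqv V E u []" then show "wlen V E u = 0" using wlen_le[of V E u "[]"] by simp
qed

lemma wlen_inv: "(\<And>x y. E x y \<Longrightarrow> E y x) \<Longrightarrow> wlen V E (inv_word u) = wlen V E u"
proof -
  assume s: "\<And>x y. E x y \<Longrightarrow> E y x"
  have *: "wlen V E (inv_word x) \<le> wlen V E x" for x
  proof -
    obtain x' where x': "eqv V E x x'" "length x' = wlen V E x" using wlen_ex by blast
    then have "eqv V E (inv_word x) (inv_word x')" using eqv_inv s by blast
    then show ?thesis using wlen_le x' by fastforce
  qed
  show ?thesis using *[of u] *[of "inv_word u"] by simp
qed

lemma wpow_Suc: "wpow w (Suc n) = w @ wpow w n"
  by (simp add: wpow_def)
lemma wpow_Suc2: "wpow w (Suc n) = wpow w n @ w"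
  unfolding wpow_def replicate_Suc replicate_append_same[symmetric] by simp
lemma wpow_0[simp]: "wpow w 0 = []"
  by (simp add: wpow_def)
lemma length_wpow[simp]: "length (wpow w n) = n * length w"
  by (induction n) (auto simp: wpow_Suc)
lemma word_wpow: "word V w \<Longrightarrow> word V (wpow w n)"
  by (induction n) (auto simp: wpow_Suc)

lemma eqv_wpow: "eqv V E x y \<Longrightarrow> eqv V E (wpow x n) (wpow y n)"
  by (induction n) (auto simp: wpow_Suc intro: eqv_app)

lemma wlen_wpow: "wlen V E (wpow x n) \<le> n * wlen V E x"
proof (induction n)
  case 0 then show ?case by (simp add: wlen_zero)
next
  case (Suc n)
  then show ?case using wlen_append[of V E x "wpow x n"] by (simp add: wpow_Suc)
qed

lemma conj_wpow: "word V u \<Longrightarrow> eqv V E (inv_word u @ wpow g n @ u) (wpow (inv_word u @ g @ u) n)"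
proof (induction n)
  case 0 then show ?case using eqv_inv_cancel by simp
next
  case (Suc n)
  have c: "eqv V E (u @ inv_word u) []" using eqv_inv_cancel2[OF Suc.prems] .
  have "eqv V E ((inv_word u @ g) @ (u @ inv_word u) @ (wpow g n @ u)) ((inv_word u @ g) @ [] @ (wpow g n @ u))"
    by (rule eqv_ctx[OF c])
  then have 1: "eqv V E ((inv_word u @ g @ u) @ (inv_word u @ wpow g n @ u)) (inv_word u @ wpow g (Suc n) @ u)"
    by (simp only: append_assoc wpow_Suc append_Nil)
  have 2: "eqv V E ([] @ (inv_word u @ wpow g n @ u) @ []) ([] @ wpow (inv_word u @ g @ u) n @ [])"
    by (rule eqv_ctx[OF Suc.IH[OF Suc.prems]])
  have 3: "eqv V E ((inv_word u @ g @ u) @ (inv_word u @ wpow g n @ u)) ((inv_word u @ g @ u) @ wpow (inv_word u @ g @ u) n)"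
    by (rule eqv_app) (use 2 in simp_all)
  show ?case unfolding wpow_Suc using eqv_trans[OF eqv_sym[OF 1] 3] unfolding wpow_Suc .
qed



definition ispop :: "'v letter \<Rightarrow> ('v \<Rightarrow> bool option list) \<Rightarrow> bool" where
  "ispop a P \<longleftrightarrow> (\<exists>r. P (fst a) = Some (\<not> snd a) # r)"

definition popc :: "('v \<Rightarrow> 'v \<Rightarrow> bool) \<Rightarrow> 'v letter \<Rightarrow> ('v \<Rightarrow> bool option list) \<Rightarrow> ('v \<Rightarrow> bool option list)" where
  "popc E a P = (\<lambda>x. if x = fst a \<or> E (fst a) x then tl (P x) else P x)"

definition pushc :: "('v \<Rightarrow> 'v \<Rightarrow> bool) \<Rightarrow> 'v letter \<Rightarrow> ('v \<Rightarrow> bool option list) \<Rightarrow> ('v \<Rightarrow> bool option list)" where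
  "pushc E a P = (\<lambda>x. if x = fst a then Some (snd a) # P x else if E (fst a) x then None # P x else P x)"

definition act :: "('v \<Rightarrow> 'v \<Rightarrow> bool) \<Rightarrow> 'v letter \<Rightarrow> ('v \<Rightarrow> bool option list) \<times> int \<Rightarrow> ('v \<Rightarrow> bool option list) \<times> int" where
  "act E a S = (if ispop a (fst S) then (popc E a (fst S), snd S - 1) else (pushc E a (fst S), snd S + 1))"

definition pile :: "('v \<Rightarrow> 'v \<Rightarrow> bool) \<Rightarrow> 'v letter list \<Rightarrow> ('v \<Rightarrow> bool option list) \<times> int" where
  "pile E w = foldl (\<lambda>S a. act E a S) (\<lambda>_. [], 0) w"

fun cz :: "bool option list \<Rightarrow> nat list" where
  "cz [] = [0]"
| "cz (None # c) = map Suc (cz c)"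
| "cz (Some _ # c) = 0 # cz c"

fun cf :: "bool list \<Rightarrow> nat list" where
  "cf [] = [0]"
| "cf (False # s) = map Suc (cf s)"
| "cf (True # s) = 0 # cf s"

definition InvS :: "('v \<Rightarrow> 'v \<Rightarrow> bool) \<Rightarrow> ('v \<Rightarrow> bool option list) \<Rightarrow> ('v \<Rightarrow> 'v \<Rightarrow> bool list) \<Rightarrow> bool" where
  "InvS E P S \<longleftrightarrow> (\<forall>v u. E v u \<longrightarrow> S u v = map Not (S v u))
     \<and> (\<forall>v u. E v u \<longrightarrow> length (cf (S v u)) = length (cz (P v)))
     \<and> (\<forall>v i. i < length (cz (P v)) \<longrightarrow> (\<Sum>u\<in>{u. E v u}. cf (S v u) ! i) \<le> cz (P v) ! i)"

definition NoPair :: "('v \<Rightarrow> bool option list) \<Rightarrow> bool" where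
  "NoPair P \<longleftrightarrow> (\<forall>v xs t ys. P v \<noteq> xs @ Some t # Some (\<not> t) # ys)"

definition Inv :: "('v \<Rightarrow> 'v \<Rightarrow> bool) \<Rightarrow> ('v \<Rightarrow> bool option list) \<Rightarrow> bool" where
  "Inv E P \<longleftrightarrow> NoPair P \<and> (\<exists>S. InvS E P S)"

lemma cz_ne: "cz c \<noteq> []"
  by (induction c rule: cz.induct) auto
lemma cf_ne: "cf c \<noteq> []"
  by (induction c rule: cf.induct) auto

lemma cf0_True: "length (cf s) \<ge> 2 \<Longrightarrow> cf s ! 0 = 0 \<Longrightarrow> \<exists>s'. s = True # s'"
  by (cases s rule: cf.cases) (auto simp: cf_ne)

lemma cf_False_pos: "i < length (cf (False # s)) \<Longrightarrow> cf (False # s) ! i = Suc (cf s ! i)"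
  by simp

lemma cz_pos: "0 < cz c ! 0 \<Longrightarrow> \<exists>r. c = None # r"
  by (cases c rule: cz.cases) (auto simp: cz_ne hd_conv_nth[symmetric] hd_map)

lemma sum_bump:
  assumes "finite A" "v \<in> A" "g v + 1 = f v" "\<And>w. w \<in> A \<Longrightarrow> w \<noteq> v \<Longrightarrow> g w = f w"
  shows "sum g A + 1 = (sum f A :: nat)"
proof -
  have "sum g A = g v + sum g (A - {v})" using assms by (simp add: sum.remove)
  moreover have "sum f A = f v + sum f (A - {v})" using assms by (simp add: sum.remove)
  moreover have "sum g (A - {v}) = sum f (A - {v})" using assms by (intro sum.cong) auto
  ultimately show ?thesis using assms by simp
qed

locale raag =
  fixes V :: "'v set" and E :: "'v \<Rightarrow> 'v \<Rightarrow> bool"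
  assumes finV: "finite V"
    and Ein: "\<And>x y. E x y \<Longrightarrow> x \<in> V \<and> y \<in> V"
    and Esym: "\<And>x y. E x y \<Longrightarrow> E y x"
    and Eirr: "\<And>x. \<not> E x x"
begin

lemma finN: "finite {u. E v u}"
  using finV Ein by (metis (mono_tags, lifting) mem_Collect_eq rev_finite_subset subsetI)

lemma C1:
  assumes inv: "InvS E P S" and pv: "P v = Some t # r" and e: "E v u"
  shows "(\<exists>r'. P u = None # r') \<and> (\<exists>s. S v u = True # s)"
proof -
  have l0: "0 < length (cz (P v))" using cz_ne by auto
  have z: "cz (P v) ! 0 = 0" using pv by simp
  have "(\<Sum>u\<in>{u. E v u}. cf (S v u) ! 0) \<le> 0" using inv l0 z unfolding InvS_def by metis
  then have "cf (S v u) ! 0 = 0" using finN e by simp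
  moreover have "length (cf (S v u)) \<ge> 2" using inv e pv unfolding InvS_def by (simp add: cz_ne Suc_le_eq)
  ultimately obtain s where s: "S v u = True # s" using cf0_True by blast
  have e2: "E u v" using Esym e .
  have suv: "S u v = False # map Not s" using inv e s unfolding InvS_def by simp
  have "0 < length (cf (map Not s))" using cf_ne by auto
  then have "cf (S u v) ! 0 = Suc (cf (map Not s) ! 0)" using suv by simp
  then have "0 < cf (S u v) ! 0" by simp
  also have "cf (S u v) ! 0 \<le> (\<Sum>w\<in>{w. E u w}. cf (S u w) ! 0)"
    using finN e2 by (intro member_le_sum) auto
  also have "\<dots> \<le> cz (P u) ! 0" using inv cz_ne unfolding InvS_def by blast
  finally show ?thesis using cz_pos s by blast
qed


lemma InvS_push:
  fixes a :: "'v letter"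
  assumes inv: "InvS E P S"
  defines "S' \<equiv> (\<lambda>x y. if x = fst a \<and> E (fst a) y then True # S x y
                  else if y = fst a \<and> E (fst a) x then False # S x y else S x y)"
  shows "InvS E (pushc E a P) S'"
proof -
  let ?v = "fst a"
  let ?P = "pushc E a P"
  have sym: "\<forall>v u. E v u \<longrightarrow> S u v = map Not (S v u)"
   and len: "\<forall>v u. E v u \<longrightarrow> length (cf (S v u)) = length (cz (P v))"
   and sm: "\<forall>v i. i < length (cz (P v)) \<longrightarrow> (\<Sum>u\<in>{u. E v u}. cf (S v u) ! i) \<le> cz (P v) ! i"
    using inv unfolding InvS_def by blast+
  have 1: "S' u v = map Not (S' v u)" if e: "E v u" for v u
  proof -
    have ne: "v \<noteq> u" using e Eirr by auto
    have e': "E u v" using Esym e .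
    have s: "S u v = map Not (S v u)" using sym e by blast
    show ?thesis using s e e' ne unfolding S'_def by (cases "v = fst a"; cases "u = fst a") simp_all
  qed
  have 2: "length (cf (S' v u)) = length (cz (?P v))" if e: "E v u" for v u
  proof -
    have ne: "v \<noteq> u" using e Eirr by auto
    have e': "E u v" using Esym e .
    have l: "length (cf (S v u)) = length (cz (P v))" using len e by blast
    show ?thesis using l e e' ne unfolding S'_def pushc_def by (cases "v = fst a"; cases "u = fst a") simp_all
  qed
  have 3: "(\<Sum>u\<in>{u. E x u}. cf (S' x u) ! i) \<le> cz (?P x) ! i" if i: "i < length (cz (?P x))" for x i
  proof (cases "x = ?v")
    case True
    then have px: "?P x = Some (snd a) # P x" by (simp add: pushc_def)
    have eq: "(\<Sum>u\<in>{u. E x u}. cf (S' x u) ! i) = (\<Sum>u\<in>{u. E x u}. (0 # cf (S x u)) ! i)"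
      using True unfolding S'_def by (intro sum.cong) auto
    show ?thesis
    proof (cases i)
      case 0
      then show ?thesis using eq by simp
    next
      case (Suc k)
      then have "k < length (cz (P x))" using i px by simp
      then show ?thesis using eq sm Suc px by simp
    qed
  next
    case False
    show ?thesis
    proof (cases "E ?v x")
      case True
      then have px: "?P x = None # P x" using False by (simp add: pushc_def)
      have ex: "E x ?v" using Esym True .
      have ik: "i < length (cz (P x))" using i px by simp
      have "(\<Sum>u\<in>{u. E x u}. cf (S' x u) ! i) = (\<Sum>u\<in>{u. E x u}. cf (S x u) ! i) + 1"
      proof (rule sum_bump[symmetric])
        show "finite {u. E x u}" by (rule finN)
        show "?v \<in> {u. E x u}" using ex by simp
        have "i < length (cf (S x ?v))" using len ex ik by simp
        then show "cf (S x ?v) ! i + 1 = cf (S' x ?v) ! i" using True False unfolding S'_def by simp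
        show "\<And>w. w \<in> {u. E x u} \<Longrightarrow> w \<noteq> ?v \<Longrightarrow> cf (S x w) ! i = cf (S' x w) ! i"
          using False unfolding S'_def by auto
      qed
      also have "\<dots> \<le> cz (P x) ! i + 1" using sm ik by simp
      also have "\<dots> = cz (?P x) ! i" using px ik by simp
      finally show ?thesis .
    next
      case nE: False
      then have px: "?P x = P x" using False by (simp add: pushc_def)
      have "(\<Sum>u\<in>{u. E x u}. cf (S' x u) ! i) = (\<Sum>u\<in>{u. E x u}. cf (S x u) ! i)"
        using False nE unfolding S'_def by (intro sum.cong) auto
      then show ?thesis using sm i px by simp
    qed
  qed
  show ?thesis unfolding InvS_def using 1 2 3 by blast
qed


lemma InvS_pop:
  fixes a :: "'v letter"
  assumes inv: "InvS E P S" and pop: "ispop a P"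
  defines "S' \<equiv> (\<lambda>x y. if (x = fst a \<and> E (fst a) y) \<or> (y = fst a \<and> E (fst a) x) then tl (S x y) else S x y)"
  shows "InvS E (popc E a P) S'"
proof -
  let ?v = "fst a"
  let ?P = "popc E a P"
  have sym: "\<forall>v u. E v u \<longrightarrow> S u v = map Not (S v u)"
   and len: "\<forall>v u. E v u \<longrightarrow> length (cf (S v u)) = length (cz (P v))"
   and sm: "\<forall>v i. i < length (cz (P v)) \<longrightarrow> (\<Sum>u\<in>{u. E v u}. cf (S v u) ! i) \<le> cz (P v) ! i"
    using inv unfolding InvS_def by blast+
  obtain r where pv: "P ?v = Some (\<not> snd a) # r" using pop unfolding ispop_def by blast
  have nb: "(\<exists>r'. P u = None # r') \<and> (\<exists>s. S ?v u = True # s)" if "E ?v u" for u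
    using C1[OF inv pv that] .
  have 1: "S' u v = map Not (S' v u)" if e: "E v u" for v u
  proof -
    have ne: "v \<noteq> u" using e Eirr by auto
    have e': "E u v" using Esym e .
    have s: "S u v = map Not (S v u)" using sym e by blast
    show ?thesis using s e e' ne unfolding S'_def by (cases "v = fst a"; cases "u = fst a") (simp_all add: map_tl)
  qed
  have 2: "length (cf (S' x y)) = length (cz (?P x))" if e: "E x y" for x y
  proof -
    have ne: "x \<noteq> y" using e Eirr by auto
    have e': "E y x" using Esym e .
    have l: "length (cf (S x y)) = length (cz (P x))" using len e by blast
    show ?thesis
    proof (cases "x = ?v")
      case True
      obtain s where s: "S ?v y = True # s" using nb e True by blast
      show ?thesis using True s l pv ne e unfolding S'_def popc_def by simp
    next
      case False
      show ?thesis
      proof (cases "y = ?v")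
        case True
        obtain s where s: "S ?v x = True # s" using nb e' True by blast
        obtain r' where r': "P x = None # r'" using nb e' True by blast
        have "S x ?v = map Not (S ?v x)" using sym e' True by blast
        then have sx: "S x ?v = False # map Not s" using s by simp
        show ?thesis using True False sx l r' e' unfolding S'_def popc_def by simp
      next
        case yF: False
        show ?thesis
        proof (cases "E ?v x")
          case True
          obtain r' where r': "P x = None # r'" using nb True by blast
          show ?thesis using True False yF r' l unfolding S'_def popc_def by simp
        next
          case nE: False
          show ?thesis using nE False yF l unfolding S'_def popc_def by simp
        qed
      qed
    qed
  qed
  have 3: "(\<Sum>u\<in>{u. E x u}. cf (S' x u) ! i) \<le> cz (?P x) ! i" if i: "i < length (cz (?P x))" for x i
  proof (cases "x = ?v")
    case True
    then have px: "?P x = r" using pv by (simp add: popc_def)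
    have eq: "(\<Sum>u\<in>{u. E x u}. cf (S' x u) ! i) = (\<Sum>u\<in>{u. E x u}. cf (S x u) ! Suc i)"
    proof (intro sum.cong refl)
      fix u assume "u \<in> {u. E x u}"
      then have e: "E ?v u" using True by simp
      obtain s where s: "S ?v u = True # s" using nb e by blast
      show "cf (S' x u) ! i = cf (S x u) ! Suc i" using s e True unfolding S'_def by simp
    qed
    have "Suc i < length (cz (P x))" using i px pv True by simp
    then show ?thesis using eq sm px pv True by (metis cz.simps(3) nth_Cons_Suc)
  next
    case False
    show ?thesis
    proof (cases "E ?v x")
      case True
      have ex: "E x ?v" using Esym True .
      obtain r' where r': "P x = None # r'" using nb True by blast
      obtain s where s: "S ?v x = True # s" using nb True by blast
      have "S x ?v = map Not (S ?v x)" using sym True by blast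
      then have sx: "S x ?v = False # map Not s" using s by simp
      have px: "?P x = r'" using r' True by (simp add: popc_def)
      have ik: "i < length (cz r')" using i px by simp
      have "(\<Sum>u\<in>{u. E x u}. cf (S' x u) ! i) + 1 = (\<Sum>u\<in>{u. E x u}. cf (S x u) ! i)"
      proof (rule sum_bump)
        show "finite {u. E x u}" by (rule finN)
        show "?v \<in> {u. E x u}" using ex by simp
        have "length (cf (S x ?v)) = length (cz (P x))" using len ex by blast
        then have "length (cf (map Not s)) = length (cz r')" using sx r' by simp
        then have "i < length (cf (map Not s))" using ik by simp
        then show "cf (S' x ?v) ! i + 1 = cf (S x ?v) ! i" using True False sx unfolding S'_def by simp
        show "\<And>w. w \<in> {u. E x u} \<Longrightarrow> w \<noteq> ?v \<Longrightarrow> cf (S' x w) ! i = cf (S x w) ! i"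
          using False unfolding S'_def by auto
      qed
      also have "\<dots> \<le> cz (P x) ! i" using sm r' ik by (metis cz.simps(2) length_map)
      also have "\<dots> = cz r' ! i + 1" using r' ik by simp
      finally show ?thesis using px by simp
    next
      case nE: False
      then have px: "?P x = P x" using False by (simp add: popc_def)
      have "(\<Sum>u\<in>{u. E x u}. cf (S' x u) ! i) = (\<Sum>u\<in>{u. E x u}. cf (S x u) ! i)"
        using False nE unfolding S'_def by (intro sum.cong) auto
      then show ?thesis using sm i px by simp
    qed
  qed
  show ?thesis unfolding InvS_def using 1 2 3 by blast
qed


lemma NoPair_push: "NoPair P \<Longrightarrow> \<not> ispop a P \<Longrightarrow> NoPair (pushc E a P)"
  unfolding NoPair_def ispop_def pushc_def
  by (auto simp: Cons_eq_append_conv)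

lemma NoPair_pop: "NoPair P \<Longrightarrow> NoPair (popc E a P)"
  unfolding NoPair_def popc_def
  by (auto simp: tl_def split: list.splits) (metis append_Cons)+

lemma Inv_act: "Inv E P \<Longrightarrow> Inv E (fst (act E a (P, n)))"
proof -
  assume "Inv E P"
  then obtain S where np: "NoPair P" and S: "InvS E P S" unfolding Inv_def by blast
  show ?thesis
  proof (cases "ispop a P")
    case True
    then show ?thesis using np S NoPair_pop InvS_pop[OF S True] unfolding Inv_def act_def by auto
  next
    case False
    then show ?thesis using np S NoPair_push InvS_push[OF S, of a] unfolding Inv_def act_def by auto
  qed
qed

lemma act_cancel:
  assumes inv: "Inv E P"
  shows "act E (inv_letter a) (act E a (P, n)) = (P, n)"
proof (cases "ispop a P")
  case True
  obtain S where S: "InvS E P S" using inv unfolding Inv_def by blast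
  obtain r where pv: "P (fst a) = Some (\<not> snd a) # r" using True unfolding ispop_def by blast
  have np: "\<not> ispop (inv_letter a) (popc E a P)"
  proof
    assume "ispop (inv_letter a) (popc E a P)"
    then obtain r' where "r = Some (snd a) # r'" using pv unfolding ispop_def popc_def by auto
    then have "P (fst a) = [] @ Some (\<not> snd a) # Some (\<not> \<not> snd a) # r'" using pv by simp
    then show False using inv unfolding Inv_def NoPair_def by blast
  qed
  have "pushc E (inv_letter a) (popc E a P) = P"
  proof
    fix x
    show "pushc E (inv_letter a) (popc E a P) x = P x"
    proof (cases "x = fst a")
      case True then show ?thesis using pv unfolding pushc_def popc_def by simp
    next
      case False
      show ?thesis
      proof (cases "E (fst a) x")
        case True
        obtain r' where "P x = None # r'" using C1[OF S pv True] by blast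
        then show ?thesis using True False unfolding pushc_def popc_def by simp
      next
        case False
        then show ?thesis using \<open>x \<noteq> fst a\<close> unfolding pushc_def popc_def by simp
      qed
    qed
  qed
  then show ?thesis using True np unfolding act_def by simp
next
  case False
  have p: "ispop (inv_letter a) (pushc E a P)" unfolding ispop_def pushc_def by simp
  have "popc E (inv_letter a) (pushc E a P) = P"
    unfolding popc_def pushc_def using Eirr by (auto simp: fun_eq_iff)
  then show ?thesis using False p unfolding act_def by simp
qed


lemma act_comm:
  assumes inv: "Inv E P" and ne: "\<not> E (fst a) (fst b)"
  shows "act E b (act E a (P, n)) = act E a (act E b (P, n))"
proof (cases "fst a = fst b")
  case True
  show ?thesis
  proof (cases "snd a = snd b")
    case True
    then have "a = b" using \<open>fst a = fst b\<close> by (simp add: prod_eq_iff)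
    then show ?thesis by simp
  next
    case False
    then have b: "b = inv_letter a" using True by (simp add: prod_eq_iff inv_letter_def)
    show ?thesis using act_cancel[OF inv, of a n] act_cancel[OF inv, of "inv_letter a" n] b by simp
  qed
next
  case False
  obtain S where S: "InvS E P S" using inv unfolding Inv_def by blast
  have ne2: "\<not> E (fst b) (fst a)" using ne Esym by blast
  have ca: "popc E a P (fst b) = P (fst b)" "pushc E a P (fst b) = P (fst b)"
    using False ne unfolding popc_def pushc_def by auto
  have cb: "popc E b P (fst a) = P (fst a)" "pushc E b P (fst a) = P (fst a)"
    using False ne2 unfolding popc_def pushc_def by auto
  have pa: "ispop b (popc E a P) = ispop b P" "ispop b (pushc E a P) = ispop b P"
    using ca unfolding ispop_def by simp_all
  have pb: "ispop a (popc E b P) = ispop a P" "ispop a (pushc E b P) = ispop a P"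
    using cb unfolding ispop_def by simp_all
  have za: "\<exists>r. P x = None # r" if "ispop a P" "E (fst a) x" for x
    using C1[OF S _ that(2)] that(1) unfolding ispop_def by blast
  have zb: "\<exists>r. P x = None # r" if "ispop b P" "E (fst b) x" for x
    using C1[OF S _ that(2)] that(1) unfolding ispop_def by blast
  show ?thesis
  proof (cases "ispop a P"; cases "ispop b P")
    assume A: "ispop a P" and B: "ispop b P"
    have "popc E b (popc E a P) = popc E a (popc E b P)"
      using False unfolding popc_def by (auto simp: fun_eq_iff)
    then show ?thesis using A B pa pb unfolding act_def by simp
  next
    assume A: "ispop a P" and B: "\<not> ispop b P"
    have "pushc E b (popc E a P) = popc E a (pushc E b P)"
    proof
      fix x
      show "pushc E b (popc E a P) x = popc E a (pushc E b P) x"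
        using False ne ne2 za[OF A, of x] unfolding popc_def pushc_def by auto
    qed
    then show ?thesis using A B pa pb unfolding act_def by simp
  next
    assume A: "\<not> ispop a P" and B: "ispop b P"
    have "popc E b (pushc E a P) = pushc E a (popc E b P)"
    proof
      fix x
      show "popc E b (pushc E a P) x = pushc E a (popc E b P) x"
        using False ne ne2 zb[OF B, of x] unfolding popc_def pushc_def by auto
    qed
    then show ?thesis using A B pa pb unfolding act_def by simp
  next
    assume A: "\<not> ispop a P" and B: "\<not> ispop b P"
    have "pushc E b (pushc E a P) = pushc E a (pushc E b P)"
      using False ne ne2 unfolding pushc_def by (auto simp: fun_eq_iff)
    then show ?thesis using A B pa pb unfolding act_def by simp
  qed
qed

lemma pile_Nil: "pile E [] = (\<lambda>_. [], 0)"
  by (simp add: pile_def)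

lemma pile_snoc: "pile E (w @ [a]) = act E a (pile E w)"
  by (simp add: pile_def)

lemma pile_append: "pile E (w @ u) = foldl (\<lambda>S a. act E a S) (pile E w) u"
  by (simp add: pile_def)

lemma Inv_Nil: "Inv E (\<lambda>_. [])"
  unfolding Inv_def NoPair_def InvS_def
  by (rule conjI, simp, rule exI[of _ "\<lambda>_ _. []"]) simp

lemma Inv_pile: "Inv E (fst (pile E w))"
proof (induction w rule: rev_induct)
  case Nil then show ?case by (simp add: pile_Nil Inv_Nil)
next
  case (snoc a w)
  then show ?case using Inv_act[of "fst (pile E w)" a "snd (pile E w)"] by (simp add: pile_snoc)
qed

lemma pile_rstep: "rstep V E x y \<Longrightarrow> pile E x = pile E y"
proof (induction rule: rstep.induct)
  case (cancel a xs ys)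
  have "pile E (xs @ a # inv_letter a # ys) = foldl (\<lambda>S a. act E a S) (act E (inv_letter a) (act E a (pile E xs))) ys"
    by (simp add: pile_def)
  also have "act E (inv_letter a) (act E a (pile E xs)) = pile E xs"
    using act_cancel[OF Inv_pile[of xs], of a "snd (pile E xs)"] by simp
  finally show ?case by (simp add: pile_append)
next
  case (comm a b xs ys)
  have "pile E (xs @ a # b # ys) = foldl (\<lambda>S a. act E a S) (act E b (act E a (pile E xs))) ys"
    by (simp add: pile_def)
  also have "act E b (act E a (pile E xs)) = act E a (act E b (pile E xs))"
    using act_comm[OF Inv_pile[of xs] comm(3), of "snd (pile E xs)"] by simp
  finally show ?case by (simp add: pile_def)
qed

lemma pile_eqv: "eqv V E x y \<Longrightarrow> pile E x = pile E y"
  unfolding eqv_def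
proof (induction rule: equivclp_induct)
  case base then show ?case by simp
next
  case (step y z) then show ?case using pile_rstep by metis
qed

end


definition F :: "('v \<Rightarrow> 'v \<Rightarrow> bool) \<Rightarrow> 'v \<Rightarrow> 'v letter \<Rightarrow> bool" where
  "F E v c \<longleftrightarrow> fst c = v \<or> E (fst c) v"

definition colf :: "'v \<Rightarrow> 'v letter \<Rightarrow> bool option" where
  "colf v c = (if fst c = v then Some (snd c) else None)"

lemma split_last_filter:
  "filter P xs = L @ [c] \<Longrightarrow> \<exists>x1 x2. xs = x1 @ c # x2 \<and> filter P x2 = []"
proof (induction xs arbitrary: L rule: rev_induct)
  case Nil then show ?case by simp
next
  case (snoc x xs)
  show ?case
  proof (cases "P x")
    case True
    then have "x = c" using snoc.prems by simp
    then show ?thesis by (intro exI[of _ xs] exI[of _ "[]"]) simp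
  next
    case False
    then have "filter P xs = L @ [c]" using snoc.prems by simp
    then obtain x1 x2 where "xs = x1 @ c # x2" "filter P x2 = []" using snoc.IH by blast
    then show ?thesis using False by (intro exI[of _ x1] exI[of _ "x2 @ [x]"]) simp
  qed
qed

lemma wpow_split:
  "p @ a # s = wpow w n \<Longrightarrow> \<exists>j q s'. p = wpow w j @ q \<and> w = q @ a # s'"
proof (induction n arbitrary: p s)
  case 0 then show ?case by simp
next
  case (Suc n)
  then have eq: "p @ a # s = w @ wpow w n" by (simp add: wpow_Suc)
  then obtain us where us: "(p = w @ us \<and> us @ a # s = wpow w n) \<or> (p @ us = w \<and> a # s = us @ wpow w n)"
    unfolding append_eq_append_conv2 by blast
  then show ?case
  proof
    assume h: "p = w @ us \<and> us @ a # s = wpow w n"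
    then obtain j q s' where "us = wpow w j @ q" "w = q @ a # s'" using Suc.IH by blast
    then show ?thesis using h by (intro exI[of _ "Suc j"] exI[of _ q] exI[of _ s']) (simp add: wpow_Suc)
  next
    assume h: "p @ us = w \<and> a # s = us @ wpow w n"
    show ?thesis
    proof (cases us)
      case Nil
      then have "[] @ a # s = wpow w n" using h by simp
      then obtain j q s' where js: "[] = wpow w j @ q" "w = q @ a # s'" using Suc.IH by blast
      then have "p = wpow w 1 @ []" using h Nil by (simp add: wpow_Suc)
      then show ?thesis using js by blast
    next
      case (Cons x us')
      then show ?thesis using h by (intro exI[of _ 0] exI[of _ p] exI[of _ us']) auto
    qed
  qed
qed

context raag begin

definition pure :: "'v letter list \<Rightarrow> bool" where
  "pure w \<longleftrightarrow> snd (pile E w) = int (length w)"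

lemma cnt_snoc: "snd (pile E (w @ [a])) \<le> snd (pile E w) + 1"
  by (simp add: pile_snoc act_def)

lemma cnt_append: "snd (pile E (x @ y)) \<le> snd (pile E x) + int (length y)"
proof (induction y rule: rev_induct)
  case Nil then show ?case by simp
next
  case (snoc a y)
  then show ?case using cnt_snoc[of "x @ y" a] by simp
qed

lemma cnt_le: "snd (pile E w) \<le> int (length w)"
  using cnt_append[of "[]" w] by (simp add: pile_Nil)

lemma pure_prefix: "pure (x @ y) \<Longrightarrow> pure x"
  using cnt_append[of x y] cnt_le[of x] unfolding pure_def by simp

lemma pure_snoc_nopop: "pure (x @ [a]) \<Longrightarrow> \<not> ispop a (fst (pile E x))"
  using cnt_le[of x] unfolding pure_def by (auto simp: pile_snoc act_def)

lemma first_pop: "\<not> pure w \<Longrightarrow> \<exists>p a s. w = p @ a # s \<and> pure p \<and> ispop a (fst (pile E p))"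
proof (induction w rule: rev_induct)
  case Nil then show ?case by (simp add: pure_def pile_Nil)
next
  case (snoc b w)
  show ?case
  proof (cases "pure w")
    case False
    then obtain p a s where "w = p @ a # s" "pure p" "ispop a (fst (pile E p))" using snoc.IH by blast
    then show ?thesis by (intro exI[of _ p] exI[of _ a] exI[of _ "s @ [b]"]) simp
  next
    case True
    then have "ispop b (fst (pile E w))" using snoc.prems unfolding pure_def
      by (auto simp: pile_snoc act_def split: if_splits)
    then show ?thesis using True by (intro exI[of _ w] exI[of _ b] exI[of _ "[]"]) simp
  qed
qed

lemma pure_col: "pure p \<Longrightarrow> fst (pile E p) v = rev (map (colf v) (filter (F E v) p))"
proof (induction p rule: rev_induct)
  case Nil then show ?case by (simp add: pile_Nil)
next
  case (snoc b p)
  have pp: "pure p" using pure_prefix snoc.prems by blast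
  have np: "\<not> ispop b (fst (pile E p))" using pure_snoc_nopop snoc.prems by blast
  have "fst (pile E (p @ [b])) v = pushc E b (fst (pile E p)) v" using np by (simp add: pile_snoc act_def)
  then show ?case using snoc.IH[OF pp] Eirr by (auto simp: pushc_def F_def colf_def)
qed

lemma pop_last: "pure p \<Longrightarrow> ispop a (fst (pile E p)) \<Longrightarrow> \<exists>L. filter (F E (fst a)) p = L @ [inv_letter a]"
proof -
  assume pp: "pure p" and ip: "ispop a (fst (pile E p))"
  obtain r where "fst (pile E p) (fst a) = Some (\<not> snd a) # r" using ip unfolding ispop_def by blast
  then have m: "map (colf (fst a)) (filter (F E (fst a)) p) = rev r @ [Some (\<not> snd a)]"
    using pure_col[OF pp, of "fst a"] by (metis rev_eq_Cons_iff)
  then have "filter (F E (fst a)) p \<noteq> []" by auto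
  then obtain L c where Lc: "filter (F E (fst a)) p = L @ [c]" by (metis rev_exhaust)
  then have "colf (fst a) c = Some (\<not> snd a)" using m by simp
  then have "c = inv_letter a" unfolding colf_def inv_letter_def by (auto split: if_splits simp: prod_eq_iff)
  then show ?thesis using Lc by blast
qed

lemma pop_pattern: "pure p \<Longrightarrow> ispop a (fst (pile E p)) \<Longrightarrow>
   \<exists>p1 p2. p = p1 @ inv_letter a # p2 \<and> filter (F E (fst a)) p2 = []"
  using pop_last split_last_filter by metis

lemma no_pattern:
  assumes "pure (p1 @ inv_letter a # p2 @ a # s)" and "filter (F E (fst a)) p2 = []"
  shows False
proof -
  have pp: "pure ((p1 @ inv_letter a # p2) @ [a])" using assms(1) pure_prefix[of "(p1 @ inv_letter a # p2) @ [a]" s] by simp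
  then have np: "\<not> ispop a (fst (pile E (p1 @ inv_letter a # p2)))" using pure_snoc_nopop by blast
  have "pure (p1 @ inv_letter a # p2)" using pp pure_prefix by blast
  then have "fst (pile E (p1 @ inv_letter a # p2)) (fst a) = Some (\<not> snd a) # rev (map (colf (fst a)) (filter (F E (fst a)) p1))"
    using pure_col assms(2) by (simp add: F_def colf_def)
  then show False using np unfolding ispop_def by blast
qed

lemma filter_F_nE: "filter (F E v) q = [] \<Longrightarrow> b \<in> set q \<Longrightarrow> \<not> E v (fst b) \<and> fst b \<noteq> v"
  using Esym unfolding F_def by (metis (mono_tags, lifting) filter_empty_conv)

lemma reduce_step:
  assumes "word V w" "\<not> pure w"
  shows "\<exists>w'. word V w' \<and> eqv V E w w' \<and> length w' < length w"
proof -
  obtain p a s where pas: "w = p @ a # s" "pure p" "ispop a (fst (pile E p))" using first_pop assms(2) by blast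
  obtain p1 p2 where pp: "p = p1 @ inv_letter a # p2" "filter (F E (fst a)) p2 = []" using pop_pattern pas by blast
  have wv: "word V p1" "word V p2" "word V s" "fst a \<in> V" using assms(1) pas pp by auto
  have "eqv V E (inv_letter a # p2) (p2 @ [inv_letter a])"
    using eqv_comm_past[of "inv_letter a" V p2 E] wv filter_F_nE[OF pp(2)] by auto
  then have 1: "eqv V E (p1 @ (inv_letter a # p2) @ (a # s)) (p1 @ (p2 @ [inv_letter a]) @ (a # s))"
    by (rule eqv_ctx)
  have 2: "eqv V E ((p1 @ p2) @ inv_letter a # inv_letter (inv_letter a) # s) ((p1 @ p2) @ s)"
    using eqv_cancel[where a="inv_letter a" and V=V and E=E and xs="p1 @ p2" and ys=s] wv by simp
  have "eqv V E w (p1 @ p2 @ s)" using 1 2 pas pp eqv_trans by fastforce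
  then show ?thesis using wv pas pp by (intro exI[of _ "p1 @ p2 @ s"]) auto
qed

lemma exists_pure: "word V w \<Longrightarrow> \<exists>w'. word V w' \<and> eqv V E w w' \<and> pure w'"
proof (induction "length w" arbitrary: w rule: less_induct)
  case less
  show ?case
  proof (cases "pure w")
    case True then show ?thesis using less.prems by (intro exI[of _ w]) simp
  next
    case False
    then obtain w' where w': "word V w'" "eqv V E w w'" "length w' < length w" using reduce_step less.prems by blast
    then obtain w'' where "word V w''" "eqv V E w' w''" "pure w''" using less.hyps by blast
    then show ?thesis using w' eqv_trans by blast
  qed
qed

lemma wlen_pile: "word V w \<Longrightarrow> int (wlen V E w) = snd (pile E w)"
proof -
  assume wv: "word V w"
  obtain w' where w': "word V w'" "eqv V E w w'" "pure w'" using exists_pure wv by blast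
  have pe: "pile E w = pile E w'" using pile_eqv w'(2) by blast
  have le: "wlen V E w \<le> length w'" using wlen_le w'(2) by blast
  obtain w2 where w2: "eqv V E w w2" "length w2 = wlen V E w" using wlen_ex by blast
  have "pile E w2 = pile E w" using pile_eqv eqv_sym w2(1) by metis
  then have "snd (pile E w) \<le> int (wlen V E w)" using cnt_le[of w2] w2 by simp
  then show ?thesis using le w' pe unfolding pure_def by simp
qed

lemma min_word: "word V g \<Longrightarrow> \<exists>w. word V w \<and> eqv V E g w \<and> length w = wlen V E g \<and> pure w"
proof -
  assume wv: "word V g"
  obtain w' where w': "word V w'" "eqv V E g w'" "pure w'" using exists_pure wv by blast
  have "int (wlen V E g) = snd (pile E g)" using wlen_pile wv by blast
  also have "\<dots> = snd (pile E w')" using pile_eqv w' by metis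
  finally show ?thesis using w' unfolding pure_def by (intro exI[of _ w']) simp
qed

lemma pure_wlen: "word V w \<Longrightarrow> pure w \<Longrightarrow> wlen V E w = length w"
  using wlen_pile unfolding pure_def by fastforce

lemma wlen_single: "fst a \<in> V \<Longrightarrow> wlen V E [a] = 1"
proof -
  assume "fst a \<in> V"
  then have "int (wlen V E [a]) = snd (pile E [a])" using wlen_pile by simp
  also have "\<dots> = 1" using pile_snoc[of "[]" a] by (simp add: pile_Nil act_def ispop_def)
  finally show ?thesis by simp
qed

end


context raag begin

definition Dp :: "'v letter list \<Rightarrow> bool" where
  "Dp w \<longleftrightarrow> (\<exists>q a m q2. w = q @ a # m @ inv_letter a # q2 \<and> filter (F E (fst a)) q = [] \<and> filter (F E (fst a)) q2 = [])"

lemma combine: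
  assumes "q @ a # s' = m1 @ inv_letter a # q2" "filter (F E (fst a)) q = []"
  shows "\<exists>m. q @ a # s' = q @ a # m @ inv_letter a # q2"
proof -
  have nq: "inv_letter a \<notin> set q" using assms(2) by (auto simp: filter_empty_conv F_def)
  have na: "a \<noteq> inv_letter a" by (simp add: inv_letter_def prod_eq_iff)
  obtain us where us: "(q = m1 @ us \<and> us @ a # s' = inv_letter a # q2) \<or> (q @ us = m1 \<and> a # s' = us @ inv_letter a # q2)"
    using assms(1) unfolding append_eq_append_conv2 by blast
  then show ?thesis
  proof
    assume h: "q = m1 @ us \<and> us @ a # s' = inv_letter a # q2"
    then show ?thesis using nq na by (cases us) auto
  next
    assume h: "q @ us = m1 \<and> a # s' = us @ inv_letter a # q2"
    then show ?thesis using na by (cases us) auto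
  qed
qed

lemma K:
  assumes pw: "pure w" and npw: "\<not> pure (wpow w n)"
  shows "Dp w"
proof -
  obtain p a s where pas: "wpow w n = p @ a # s" "pure p" "ispop a (fst (pile E p))"
    using first_pop npw by blast
  obtain j q s' where jq: "p = wpow w j @ q" "w = q @ a # s'" using wpow_split pas(1) by metis
  obtain L where L: "filter (F E (fst a)) p = L @ [inv_letter a]" using pop_last pas by blast
  let ?F = "F E (fst a)"
  show ?thesis
  proof (cases "filter ?F q = []")
    case False
    then obtain L' c where Lc: "filter ?F q = L' @ [c]" by (metis rev_exhaust)
    have "filter ?F (wpow w j) @ L' @ [c] = L @ [inv_letter a]" using L Lc jq by simp
    then have "c = inv_letter a" by (metis append_assoc last_snoc)
    then obtain q1 q2 where "q = q1 @ inv_letter a # q2" "filter ?F q2 = []"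
      using split_last_filter Lc by metis
    then show ?thesis using no_pattern[of q1 a q2 s'] pw jq by simp
  next
    case True
    then have fj: "filter ?F (wpow w j) = L @ [inv_letter a]" using L jq by simp
    then obtain j' where j': "j = Suc j'" by (cases j) auto
    have "a \<in> set w" using jq by simp
    then have "filter ?F w \<noteq> []" by (auto simp: filter_empty_conv F_def)
    then obtain L' c where Lc: "filter ?F w = L' @ [c]" by (metis rev_exhaust)
    have "filter ?F (wpow w j') @ L' @ [c] = L @ [inv_letter a]" using fj Lc j' by (simp add: wpow_Suc2)
    then have "c = inv_letter a" by (metis append_assoc last_snoc)
    then obtain m1 q2 where m1: "w = m1 @ inv_letter a # q2" "filter ?F q2 = []"
      using split_last_filter Lc by metis
    obtain m where "q @ a # s' = q @ a # m @ inv_letter a # q2" using combine[of q a s' m1 q2] m1 jq True by metis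
    then show ?thesis unfolding Dp_def using jq True m1 by blast
  qed
qed

end


context raag begin

lemma cyc_v: "cyc_reduced V E g \<Longrightarrow> word V g1 \<Longrightarrow> word V g2 \<Longrightarrow> eqv V E g (g1 @ g2) \<Longrightarrow>
   wlen V E g = wlen V E g1 + wlen V E g2 \<Longrightarrow> wlen V E (g2 @ g1) = wlen V E g2 + wlen V E g1"
proof -
  assume c: "cyc_reduced V E g" and w: "word V g1" "word V g2" and e: "eqv V E g (g1 @ g2)"
    and l: "wlen V E g = wlen V E g1 + wlen V E g2"
  have "wlen V E g \<le> wlen V E (inv_word g1 @ g @ g1)" using c w unfolding cyc_reduced_def by blast
  also have "eqv V E (inv_word g1 @ g @ g1) ((inv_word g1 @ g1) @ g2 @ g1)"
    using eqv_ctx[OF e, of "inv_word g1" g1] by simp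
  moreover have "eqv V E ((inv_word g1 @ g1) @ (g2 @ g1)) ([] @ (g2 @ g1))"
    by (rule eqv_app[OF eqv_inv_cancel[OF w(1)] eqv_refl])
  ultimately have "wlen V E g \<le> wlen V E (g2 @ g1)" using wlen_eqv eqv_trans
    by (metis append_Nil)
  moreover have "wlen V E (g2 @ g1) \<le> wlen V E g2 + wlen V E g1" by (rule wlen_append)
  ultimately show ?thesis using l by simp
qed

lemma cyc_ii: "cyc_reduced V E g \<Longrightarrow> word V u \<Longrightarrow> \<not> eqv V E u [] \<Longrightarrow>
   eqv V E g (inv_word u @ h @ u) \<Longrightarrow>
   wlen V E g = wlen V E (inv_word u) + wlen V E h + wlen V E u \<Longrightarrow> False"
proof -
  assume c: "cyc_reduced V E g" and w: "word V u" and ne: "\<not> eqv V E u []"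
    and e: "eqv V E g (inv_word u @ h @ u)"
    and l: "wlen V E g = wlen V E (inv_word u) + wlen V E h + wlen V E u"
  have wi: "word V (inv_word u)" using w by simp
  have "wlen V E g \<le> wlen V E (inv_word (inv_word u) @ g @ inv_word u)"
    using c wi unfolding cyc_reduced_def by blast
  also have "inv_word (inv_word u) @ g @ inv_word u = u @ g @ inv_word u" by simp
  finally have 1: "wlen V E g \<le> wlen V E (u @ g @ inv_word u)" .
  have "eqv V E (u @ g @ inv_word u) (u @ (inv_word u @ h @ u) @ inv_word u)"
    by (rule eqv_ctx[OF e])
  moreover have "eqv V E ((u @ inv_word u) @ h @ (u @ inv_word u)) ([] @ h @ [])"
    by (rule eqv_app[OF eqv_inv_cancel2[OF w] eqv_app[OF eqv_refl eqv_inv_cancel2[OF w]]])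
  ultimately have "eqv V E (u @ g @ inv_word u) h" using eqv_trans by fastforce
  then have "wlen V E g \<le> wlen V E h" using 1 wlen_eqv by metis
  moreover have "wlen V E u > 0" using ne wlen_zero by blast
  ultimately show False using l by simp
qed

lemma main:
  assumes wg: "word V g"
  shows "(cyc_reduced V E g \<longleftrightarrow>
            \<not> (\<exists>u h. word V u \<and> word V h \<and> \<not> eqv V E u [] \<and>
                  eqv V E g (inv_word u @ h @ u) \<and>
                  wlen V E g = wlen V E (inv_word u) + wlen V E h + wlen V E u))
       \<and> (cyc_reduced V E g \<longleftrightarrow>
            (\<forall>n::nat. n \<ge> 2 \<longrightarrow> wlen V E (wpow g n) = n * wlen V E g))
       \<and> (cyc_reduced V E g \<longleftrightarrow>
            (\<exists>n::nat. n \<ge> 2 \<and> wlen V E (wpow g n) = n * wlen V E g))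
       \<and> (cyc_reduced V E g \<longleftrightarrow>
            (\<forall>g1 g2. word V g1 \<and> word V g2 \<and> eqv V E g (g1 @ g2) \<and>
                wlen V E g = wlen V E g1 + wlen V E g2 \<longrightarrow>
                wlen V E (g2 @ g1) = wlen V E g2 + wlen V E g1))"
proof -
  obtain w where w: "word V w" "eqv V E g w" "length w = wlen V E g" "pure w" using min_word wg by blast
  show ?thesis
  proof (cases "Dp w")
    case False
    have pw: "wlen V E (wpow g n) = n * wlen V E g" for n
    proof -
      have "pure (wpow w n)" using K[OF w(4)] False by blast
      then have "wlen V E (wpow w n) = n * length w" using pure_wlen word_wpow[OF w(1)] by simp
      moreover have "wlen V E (wpow g n) = wlen V E (wpow w n)" using eqv_wpow[OF w(2)] wlen_eqv by blast
      ultimately show ?thesis using w(3) by simp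
    qed
    have cr: "cyc_reduced V E g"
      unfolding cyc_reduced_def
    proof (intro allI impI)
      fix u assume wu: "word V u"
      show "wlen V E g \<le> wlen V E (inv_word u @ g @ u)"
      proof (rule ccontr)
        assume "\<not> ?thesis"
        then have lt: "wlen V E (inv_word u @ g @ u) + 1 \<le> wlen V E g" by simp
        define h where "h = inv_word u @ g @ u"
        define N where "N = 2 * wlen V E u + 1"
        let ?X = "inv_word u @ wpow g N @ u"
        have "eqv V E ((u @ inv_word u) @ wpow g N @ (u @ inv_word u)) ([] @ wpow g N @ [])"
          by (rule eqv_app[OF eqv_inv_cancel2[OF wu] eqv_app[OF eqv_refl eqv_inv_cancel2[OF wu]]])
        then have e1: "eqv V E (u @ ?X @ inv_word u) (wpow g N)" by simp
        have e2: "eqv V E (u @ ?X @ inv_word u) (u @ wpow h N @ inv_word u)"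
          unfolding h_def by (rule eqv_ctx[OF conj_wpow[OF wu]])
        have "N * wlen V E g = wlen V E (wpow g N)" using pw by simp
        also have "\<dots> = wlen V E (u @ wpow h N @ inv_word u)" using e1 e2 eqv_sym eqv_trans wlen_eqv by metis
        also have "\<dots> \<le> wlen V E u + (wlen V E (wpow h N) + wlen V E (inv_word u))"
          using wlen_append[of V E u "wpow h N @ inv_word u"] wlen_append[of V E "wpow h N" "inv_word u"] by simp
        also have "\<dots> \<le> wlen V E u + (N * wlen V E h + wlen V E u)"
          using wlen_wpow[of V E h N] wlen_inv[of E V u] Esym by simp
        finally have "N * wlen V E g \<le> 2 * wlen V E u + N * wlen V E h" by simp
        moreover have "N * (wlen V E h + 1) \<le> N * wlen V E g" using lt unfolding h_def by (rule mult_le_mono2)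
        ultimately show False unfolding N_def by (simp add: algebra_simps)
      qed
    qed
    have ii: "\<not> (\<exists>u h. word V u \<and> word V h \<and> \<not> eqv V E u [] \<and>
                  eqv V E g (inv_word u @ h @ u) \<and>
                  wlen V E g = wlen V E (inv_word u) + wlen V E h + wlen V E u)"
      using cyc_ii[OF cr] by blast
    have v: "\<forall>g1 g2. word V g1 \<and> word V g2 \<and> eqv V E g (g1 @ g2) \<and>
                wlen V E g = wlen V E g1 + wlen V E g2 \<longrightarrow>
                wlen V E (g2 @ g1) = wlen V E g2 + wlen V E g1"
      using cyc_v[OF cr] by blast
    show ?thesis using cr ii v pw by auto
  next
    case True
    then obtain q a m q2 where D: "w = q @ a # m @ inv_letter a # q2" "filter (F E (fst a)) q = []"
      "filter (F E (fst a)) q2 = []" unfolding Dp_def by blast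
    define h where "h = q @ m @ q2"
    define L where "L = length w"
    have L2: "L \<ge> 2" "length h = L - 2" unfolding L_def h_def using D by auto
    have wa: "fst a \<in> V" and wh: "word V h" and wq: "word V q" "word V q2"
      using w(1) D unfolding h_def by auto
    have wl: "wlen V E g = L" using w(3) L_def by simp
    have ea: "eqv V E (a # q) (q @ [a])"
      using eqv_comm_past[of a V q E] wa wq filter_F_nE[OF D(2)] by auto
    have eb: "eqv V E (inv_letter a # q2) (q2 @ [inv_letter a])"
      using eqv_comm_past[of "inv_letter a" V q2 E] wa wq filter_F_nE[OF D(3)] by auto
    have "eqv V E ((q @ [a]) @ (m @ (inv_letter a # q2))) ((a # q) @ (m @ (q2 @ [inv_letter a])))"
      by (rule eqv_app[OF eqv_sym[OF ea] eqv_app[OF eqv_refl eb]])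
    then have "eqv V E w ([a] @ h @ [inv_letter a])" using D unfolding h_def by simp
    then have eg: "eqv V E g ([a] @ h @ [inv_letter a])" using w(2) eqv_trans by blast
    have w1: "wlen V E [a] = 1" "wlen V E [inv_letter a] = 1" using wlen_single wa by auto
    have "L \<le> wlen V E ([a] @ h @ [inv_letter a])" using wl wlen_eqv[OF eg] by simp
    also have "\<dots> \<le> wlen V E [a] + (wlen V E h + wlen V E [inv_letter a])"
      using wlen_append[of V E "[a]" "h @ [inv_letter a]"] wlen_append[of V E h "[inv_letter a]"] by simp
    finally have "L \<le> wlen V E h + 2" using w1 by simp
    then have wlh: "wlen V E h = L - 2" using wlen_le_length[of V E h] L2 by simp
    have ncr: "\<not> cyc_reduced V E g"
    proof
      assume c: "cyc_reduced V E g"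
      have wa1: "word V [a]" using wa by simp
      have c1: "wlen V E g \<le> wlen V E (inv_word [a] @ g @ [a])" using c wa1 unfolding cyc_reduced_def by blast
      have e1: "eqv V E ([inv_letter a] @ g @ [a]) ([inv_letter a] @ ([a] @ h @ [inv_letter a]) @ [a])"
        by (rule eqv_ctx[OF eg])
      have e2: "eqv V E ([] @ inv_letter a # inv_letter (inv_letter a) # (h @ [inv_letter a, a])) ([] @ (h @ [inv_letter a, a]))"
        by (rule eqv_cancel) (simp add: wa)
      have e3: "eqv V E (h @ inv_letter a # inv_letter (inv_letter a) # []) (h @ [])"
        by (rule eqv_cancel) (simp add: wa)
      have "eqv V E (inv_letter a # g @ [a]) h"
        using eqv_trans[OF eqv_trans[OF e1[simplified] e2[simplified]] e3[simplified]] .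
      then have "wlen V E g \<le> wlen V E h" using c1 wlen_eqv by fastforce
      then show False using wlh wl L2 by simp
    qed
    have nii: "\<exists>u h. word V u \<and> word V h \<and> \<not> eqv V E u [] \<and>
                  eqv V E g (inv_word u @ h @ u) \<and>
                  wlen V E g = wlen V E (inv_word u) + wlen V E h + wlen V E u"
    proof (intro exI conjI)
      show "word V [inv_letter a]" "word V h" using wa wh by auto
      show "\<not> eqv V E [inv_letter a] []" using w1 wlen_zero by force
      show "eqv V E g (inv_word [inv_letter a] @ h @ [inv_letter a])" using eg by simp
      show "wlen V E g = wlen V E (inv_word [inv_letter a]) + wlen V E h + wlen V E [inv_letter a]"
        using w1 wlh wl L2 by simp
    qed
    have niv: "\<not> wlen V E (wpow g n) = n * wlen V E g" if n2: "n \<ge> 2" for n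
    proof -
      have "eqv V E (inv_word [inv_letter a] @ wpow h n @ [inv_letter a]) (wpow (inv_word [inv_letter a] @ h @ [inv_letter a]) n)"
        by (rule conj_wpow) (simp add: wa)
      then have e: "eqv V E ([a] @ wpow h n @ [inv_letter a]) (wpow ([a] @ h @ [inv_letter a]) n)" by simp
      have "wlen V E (wpow g n) = wlen V E (wpow ([a] @ h @ [inv_letter a]) n)"
        using eqv_wpow[OF eg] wlen_eqv by blast
      also have "\<dots> = wlen V E ([a] @ wpow h n @ [inv_letter a])" using e wlen_eqv by metis
      also have "\<dots> \<le> wlen V E [a] + (wlen V E (wpow h n) + wlen V E [inv_letter a])"
        using wlen_append[of V E "[a]" "wpow h n @ [inv_letter a]"] wlen_append[of V E "wpow h n" "[inv_letter a]"] by simp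
      also have "\<dots> \<le> 1 + (n * (L - 2) + 1)" using w1 wlen_wpow[of V E h n] wlh by simp
      finally have "wlen V E (wpow g n) \<le> n * (L - 2) + 2" by simp
      moreover have "n * (L - 2) + 2 < n * L"
      proof -
        obtain L' where L': "L = L' + 2" using L2 by (metis le_add_diff_inverse2)
        then show ?thesis using n2 by (simp add: algebra_simps)
      qed
      ultimately show ?thesis using wl by simp
    qed
    have nv: "\<not> (\<forall>g1 g2. word V g1 \<and> word V g2 \<and> eqv V E g (g1 @ g2) \<and>
                wlen V E g = wlen V E g1 + wlen V E g2 \<longrightarrow>
                wlen V E (g2 @ g1) = wlen V E g2 + wlen V E g1)"
    proof
      assume A: "\<forall>g1 g2. word V g1 \<and> word V g2 \<and> eqv V E g (g1 @ g2) \<and>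
                wlen V E g = wlen V E g1 + wlen V E g2 \<longrightarrow>
                wlen V E (g2 @ g1) = wlen V E g2 + wlen V E g1"
      have "wlen V E (h @ [inv_letter a]) \<le> wlen V E h + 1"
        using wlen_append[of V E h "[inv_letter a]"] w1 by simp
      moreover have "L \<le> 1 + wlen V E (h @ [inv_letter a])"
        using wl eg wlen_eqv wlen_append[of V E "[a]" "h @ [inv_letter a]"] w1 by (metis append_Cons append_Nil)
      ultimately have l2: "wlen V E (h @ [inv_letter a]) = L - 1" using wlh L2 by simp
      have "eqv V E (h @ inv_letter a # inv_letter (inv_letter a) # []) (h @ [])"
        by (rule eqv_cancel) (simp add: wa)
      then have l3: "wlen V E ((h @ [inv_letter a]) @ [a]) = L - 2" using wlh wlen_eqv by fastforce
      have "wlen V E ((h @ [inv_letter a]) @ [a]) = wlen V E (h @ [inv_letter a]) + wlen V E [a]"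
      proof -
        have "word V [a]" "word V (h @ [inv_letter a])" using wa wh by auto
        moreover have "eqv V E g ([a] @ (h @ [inv_letter a]))" using eg by simp
        moreover have "wlen V E g = wlen V E [a] + wlen V E (h @ [inv_letter a])" using wl w1 l2 L2 by simp
        ultimately show ?thesis using A by blast
      qed
      then show False using l3 l2 w1 L2 by simp
    qed
    show ?thesis using ncr nii niv nv by blast
  qed
qed

end

theorem lemma2p1:
  fixes V :: "'v set" and E :: "'v \<Rightarrow> 'v \<Rightarrow> bool" and g :: "'v letter list"
  assumes "finite V"
    and "\<And>x y. E x y \<Longrightarrow> x \<in> V \<and> y \<in> V"
    and "\<And>x y. E x y \<Longrightarrow> E y x"
    and "\<And>x. \<not> E x x"
    and "word V g"
  shows "(cyc_reduced V E g \<longleftrightarrow>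
            \<not> (\<exists>u h. word V u \<and> word V h \<and> \<not> eqv V E u [] \<and>
                  eqv V E g (inv_word u @ h @ u) \<and>
                  wlen V E g = wlen V E (inv_word u) + wlen V E h + wlen V E u))
       \<and> (cyc_reduced V E g \<longleftrightarrow>
            (\<forall>n::nat. n \<ge> 2 \<longrightarrow> wlen V E (wpow g n) = n * wlen V E g))
       \<and> (cyc_reduced V E g \<longleftrightarrow>
            (\<exists>n::nat. n \<ge> 2 \<and> wlen V E (wpow g n) = n * wlen V E g))
       \<and> (cyc_reduced V E g \<longleftrightarrow>
            (\<forall>g1 g2. word V g1 \<and> word V g2 \<and> eqv V E g (g1 @ g2) \<and>
                wlen V E g = wlen V E g1 + wlen V E g2 \<longrightarrow>
                wlen V E (g2 @ g1) = wlen V E g2 + wlen V E g1))"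
proof -
  interpret raag V E using assms(1-4) by unfold_locales auto
  show ?thesis using main[OF assms(5)] .
qed


end
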